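(* Consider an $N$-player finite-horizon LQ game, viewed as the quadratic game in the stacked inputs $U_1,\ldots,U_N$ described in the context, under its gradient-based learning dynamics with an arbitrary disturbance in player $i$'s gradient. If player $j\neq i$ is disturbance decoupled from player $i$, then $$\begin{bmatrix}B_j^\top\\ B_j^\top A^\top\\ \vdots\\ B_j^\top (A^\top)^{T-1}\end{bmatrix}Q_j\begin{bmatrix}B_i & AB_i & \cdots & A^{T-1}B_i\end{bmatrix}=0.$$ Moreover, if in addition $Q_j$ is positive definite and $T\ge m$, then the controllable subspace of the pair $(\tilde A,\tilde B_i)$ is contained in the unobservable subspace of the pair $(\tilde B_j^\top,\tilde A^\top)$ (output matrix $\tilde B_j^\top$, state matrix $\tilde A^\top$), where $\tilde A=Q_j^{1/2}AQ_j^{-1/2}$, $\tilde B_i=Q_j^{1/2}B_i$, $\tilde B_j=Q_j^{1/2}B_j$.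
   Context: Finite-horizon LQ game: state $z^t\in\mathbb{R}^m$, initial state $z^0$, horizon $T$, dynamics $z^{t+1}=Az^t+\sum_{\ell=1}^N B_\ell u_\ell^t$ ($t=0,\ldots,T-1$), with $A\in\mathbb{R}^{m\times m}$, $B_\ell\in\mathbb{R}^{m\times m_\ell}$. Player $\ell$ chooses $U_\ell=(u_\ell^0,\ldots,u_\ell^{T-1})\in\mathbb{R}^{n_\ell}$, $n_\ell=Tm_\ell$, to minimize $\tfrac12\big(\sum_{t=0}^T (z^t)^\top Q_\ell z^t+\sum_{t=0}^{T-1}(u_\ell^t)^\top R_\ell u_\ell^t\big)$, with $Q_\ell\in\mathbb{R}^{m\times m}$, $R_\ell\in\mathbb{R}^{m_\ell\times m_\ell}$ symmetric. Let $n=\sum_\ell n_\ell$. Writing $Z=(z^0,\ldots,z^T)=\sum_\ell G_\ell U_\ell+Hz^0$, where $H=[I;A;\ldots;A^T]$ and $G_\ell\in\mathbb{R}^{(T+1)m\times Tm_\ell}$ has block $(t,s)$ ($t=0,\ldots,T$, $s=0,\ldots,T-1$) equal to $A^{t-1-s}B_\ell$ if $s\le t-1$ and $0$ otherwise, the cost of player $\ell$ is $f_\ell(U)=\tfrac12(\sum_q G_qU_q+Hz^0)^\top\bar Q_\ell(\sum_q G_qU_q+Hz^0)+\tfrac12U_\ell^\top\bar R_\ell U_\ell$ with $\bar Q_\ell=\mathrm{blkdiag}(Q_\ell,\ldots,Q_\ell)$ ($T+1$ blocks), $\bar R_\ell=\mathrm{blkdiag}(R_\ell,\ldots,R_\ell)$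 ($T$ blocks). With step sizes $\gamma_\ell>0$ and $\Gamma=\mathrm{blkdiag}(\gamma_1I_{n_1},\ldots,\gamma_NI_{n_N})$, the undisturbed learning dynamics are $U^{k+1}=WU^k-\Gamma c$ where $c=(G_1^\top\bar Q_1Hz^0,\ldots,G_N^\top\bar Q_NHz^0)$, $W=I_n-M$, and $M$ is the block matrix with $M_{\ell q}=\gamma_\ell G_\ell^\top\bar Q_\ell G_q$ for $\ell\neq q$ and $M_{\ell\ell}=\gamma_\ell(G_\ell^\top\bar Q_\ell G_\ell+\bar R_\ell)$. Disturbed dynamics: $Y^{k+1}=WY^k-\Gamma c-\Gamma d^k$ with $d^k\in\mathcal{D}_i=\{d\in\mathbb{R}^n: d_q=0\ \forall q\neq i\}$ arbitrary. Player $j\neq i$ is disturbance decoupled from player $i$ if for every initial $U^0$, with $Y^0=U^0$, one has $Y^k_j=U^k_j$ for all $k\ge0$ and every such disturbance sequence. The controllable subspace of $(\tilde A,\tilde B_i)$ is $\mathrm{im}[\tilde B_i,\tilde A\tilde B_i,\ldots,\tilde A^{m-1}\tilde B_i]$; the unobservable subspace of $(C,F)$ is $\{x: CF^px=0\ \forall p\ge0\}$. *)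

theory Defs
  imports "Jordan_Normal_Form.Matrix"
begin

text \<open>Player index l < N; state dimension m; player l's input
dimension is mi l; the stacked input of player l has dimension T * mi l.
A collection of player vectors U :: nat => real vec represents the stacked U = (U_1,...,U_N).\<close>

definition G_mat :: "nat \<Rightarrow> nat \<Rightarrow> real mat \<Rightarrow> real mat \<Rightarrow> nat \<Rightarrow> real mat" where
  "G_mat m T A B ml = mat (Suc T * m) (T * ml)
     (\<lambda>(r, c). let t = r div m; a = r mod m; s = c div ml; b = c mod ml in
        if s < t then (A ^\<^sub>m (t - 1 - s) * B) $$ (a, b) else 0)"

definition H_mat :: "nat \<Rightarrow> nat \<Rightarrow> real mat \<Rightarrow> real mat" where
  "H_mat m T A = mat (Suc T * m) m (\<lambda>(r, c). (A ^\<^sub>m (r div m)) $$ (r mod m, c))"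

definition blkdiag_rep :: "nat \<Rightarrow> nat \<Rightarrow> real mat \<Rightarrow> real mat" where
  "blkdiag_rep k d X = mat (k * d) (k * d)
     (\<lambda>(r, c). if r div d = c div d then X $$ (r mod d, c mod d) else 0)"

definition M_blk :: "nat \<Rightarrow> nat \<Rightarrow> real mat \<Rightarrow> (nat \<Rightarrow> real mat) \<Rightarrow> (nat \<Rightarrow> nat)
     \<Rightarrow> (nat \<Rightarrow> real mat) \<Rightarrow> (nat \<Rightarrow> real mat) \<Rightarrow> (nat \<Rightarrow> real) \<Rightarrow> nat \<Rightarrow> nat \<Rightarrow> real mat" where
  "M_blk m T A B mi Q R \<gamma> l q =
     \<gamma> l \<cdot>\<^sub>m (transpose_mat (G_mat m T A (B l) (mi l)) * blkdiag_rep (Suc T) m (Q l)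
                 * G_mat m T A (B q) (mi q)
              + (if l = q then blkdiag_rep T (mi l) (R l) else 0\<^sub>m (T * mi l) (T * mi q)))"

definition c_blk :: "nat \<Rightarrow> nat \<Rightarrow> real mat \<Rightarrow> (nat \<Rightarrow> real mat) \<Rightarrow> (nat \<Rightarrow> nat)
     \<Rightarrow> (nat \<Rightarrow> real mat) \<Rightarrow> real vec \<Rightarrow> nat \<Rightarrow> real vec" where
  "c_blk m T A B mi Q z0 l =
     (transpose_mat (G_mat m T A (B l) (mi l)) * blkdiag_rep (Suc T) m (Q l) * H_mat m T A) *\<^sub>v z0"

fun vsum :: "nat \<Rightarrow> (nat \<Rightarrow> real vec) \<Rightarrow> nat \<Rightarrow> real vec" where
  "vsum d f 0 = 0\<^sub>v d"
| "vsum d f (Suc k) = vsum d f k + f k"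

text \<open>One step U -> W U - Gamma c - Gamma dv, blockwise (W = I - M); dv is the
disturbance, given blockwise (dv l is the l-th block).\<close>
definition lq_step :: "nat \<Rightarrow> nat \<Rightarrow> nat \<Rightarrow> real mat \<Rightarrow> (nat \<Rightarrow> real mat) \<Rightarrow> (nat \<Rightarrow> nat)
     \<Rightarrow> (nat \<Rightarrow> real mat) \<Rightarrow> (nat \<Rightarrow> real mat) \<Rightarrow> (nat \<Rightarrow> real) \<Rightarrow> real vec
     \<Rightarrow> (nat \<Rightarrow> real vec) \<Rightarrow> (nat \<Rightarrow> real vec) \<Rightarrow> (nat \<Rightarrow> real vec)" where
  "lq_step N m T A B mi Q R \<gamma> z0 dv U = (\<lambda>l.
     U l - vsum (T * mi l) (\<lambda>q. M_blk m T A B mi Q R \<gamma> l q *\<^sub>v U q) N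
         - \<gamma> l \<cdot>\<^sub>v c_blk m T A B mi Q z0 l - \<gamma> l \<cdot>\<^sub>v dv l)"

text \<open>Trajectory of the learning dynamics with disturbance sequence d (d k is d^k, blockwise).
The undisturbed dynamics is the case d k = 0.\<close>
fun lq_traj :: "nat \<Rightarrow> nat \<Rightarrow> nat \<Rightarrow> real mat \<Rightarrow> (nat \<Rightarrow> real mat) \<Rightarrow> (nat \<Rightarrow> nat)
     \<Rightarrow> (nat \<Rightarrow> real mat) \<Rightarrow> (nat \<Rightarrow> real mat) \<Rightarrow> (nat \<Rightarrow> real) \<Rightarrow> real vec
     \<Rightarrow> (nat \<Rightarrow> nat \<Rightarrow> real vec) \<Rightarrow> (nat \<Rightarrow> real vec) \<Rightarrow> nat \<Rightarrow> (nat \<Rightarrow> real vec)" where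
  "lq_traj N m T A B mi Q R \<gamma> z0 d U0 0 = U0"
| "lq_traj N m T A B mi Q R \<gamma> z0 d U0 (Suc k) =
     lq_step N m T A B mi Q R \<gamma> z0 (d k) (lq_traj N m T A B mi Q R \<gamma> z0 d U0 k)"

definition dist_seq_in :: "nat \<Rightarrow> (nat \<Rightarrow> nat) \<Rightarrow> nat \<Rightarrow> nat \<Rightarrow> (nat \<Rightarrow> nat \<Rightarrow> real vec) \<Rightarrow> bool" where
  "dist_seq_in N ni T i d \<longleftrightarrow>
     (\<forall>k. \<forall>q<N. d k q \<in> carrier_vec (ni q) \<and> (q \<noteq> i \<longrightarrow> d k q = 0\<^sub>v (ni q)))"

definition dist_decoupled :: "nat \<Rightarrow> nat \<Rightarrow> nat \<Rightarrow> real mat \<Rightarrow> (nat \<Rightarrow> real mat) \<Rightarrow> (nat \<Rightarrow> nat)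
     \<Rightarrow> (nat \<Rightarrow> real mat) \<Rightarrow> (nat \<Rightarrow> real mat) \<Rightarrow> (nat \<Rightarrow> real) \<Rightarrow> real vec \<Rightarrow> nat \<Rightarrow> nat \<Rightarrow> bool" where
  "dist_decoupled N m T A B mi Q R \<gamma> z0 i j \<longleftrightarrow>
     (\<forall>U0 d. (\<forall>l<N. U0 l \<in> carrier_vec (T * mi l)) \<longrightarrow> dist_seq_in N (\<lambda>l. T * mi l) T i d \<longrightarrow>
        (\<forall>k. lq_traj N m T A B mi Q R \<gamma> z0 d U0 k j
             = lq_traj N m T A B mi Q R \<gamma> z0 (\<lambda>_ l. 0\<^sub>v (T * mi l)) U0 k j))"

definition ctrb_mat :: "nat \<Rightarrow> nat \<Rightarrow> real mat \<Rightarrow> real mat \<Rightarrow> nat \<Rightarrow> real mat" where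
  "ctrb_mat m k A B mB = mat m (k * mB) (\<lambda>(r, c). (A ^\<^sub>m (c div mB) * B) $$ (r, c mod mB))"

definition obs_stack :: "nat \<Rightarrow> nat \<Rightarrow> real mat \<Rightarrow> real mat \<Rightarrow> nat \<Rightarrow> real mat" where
  "obs_stack m k A B mB = mat (k * mB) m
     (\<lambda>(r, c). (transpose_mat B * (transpose_mat A) ^\<^sub>m (r div mB)) $$ (r mod mB, c))"

definition sym_mat :: "real mat \<Rightarrow> bool" where
  "sym_mat X \<longleftrightarrow> transpose_mat X = X"

definition pos_def_mat :: "nat \<Rightarrow> real mat \<Rightarrow> bool" where
  "pos_def_mat n X \<longleftrightarrow> X \<in> carrier_mat n n \<and> sym_mat X \<and>
     (\<forall>x \<in> carrier_vec n. x \<noteq> 0\<^sub>v n \<longrightarrow> x \<bullet> (X *\<^sub>v x) > 0)"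

definition ctrb_subspace :: "nat \<Rightarrow> real mat \<Rightarrow> real mat \<Rightarrow> nat \<Rightarrow> real vec set" where
  "ctrb_subspace n F Bc mB = {ctrb_mat n n F Bc mB *\<^sub>v x | x. x \<in> carrier_vec (n * mB)}"

definition unobs_subspace :: "nat \<Rightarrow> real mat \<Rightarrow> real mat \<Rightarrow> real vec set" where
  "unobs_subspace n C F = {x \<in> carrier_vec n. \<forall>p. C *\<^sub>v ((F ^\<^sub>m p) *\<^sub>v x) = 0\<^sub>v (dim_row C)}"

end

theory Submission
  imports Defs "Jordan_Normal_Form.VS_Connect"
begin

lemma pow_mat_commute:
  fixes F :: "'a::semiring_1 mat"
  assumes F: "F \<in> carrier_mat m m"
  shows "F * F ^\<^sub>m p = F ^\<^sub>m p * F"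
proof (induction p)
  case 0
  then show ?case using F by simp
next
  case (Suc p)
  have "F * F ^\<^sub>m Suc p = (F * F ^\<^sub>m p) * F" using F by (simp add: assoc_mult_mat[of _ m m _ m _ m])
  also have "\<dots> = F ^\<^sub>m Suc p * F" using Suc by simp
  finally show ?case .
qed

lemma pow_mat_Suc_left:
  fixes F :: "'a::semiring_1 mat"
  assumes F: "F \<in> carrier_mat m m"
  shows "F ^\<^sub>m Suc p = F * F ^\<^sub>m p"
  using pow_mat_commute[OF F] by simp

lemma transpose_pow:
  fixes A :: "real mat"
  assumes A: "A \<in> carrier_mat m m"
  shows "transpose_mat (A ^\<^sub>m p) = (transpose_mat A) ^\<^sub>m p"
proof (induction p)
  case 0
  then show ?case using A by simp
next
  case (Suc p)
  have At: "transpose_mat A \<in> carrier_mat m m" using A by simp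
  have "transpose_mat (A ^\<^sub>m Suc p) = transpose_mat A * transpose_mat (A ^\<^sub>m p)"
    using A by (simp add: transpose_mult[of _ m m _ m])
  also have "\<dots> = (transpose_mat A) ^\<^sub>m Suc p" using Suc pow_mat_Suc_left[OF At] by simp
  finally show ?case .
qed

lemma triple_entry:
  fixes P Q R :: "real mat"
  assumes P: "P \<in> carrier_mat m n1" and Q: "Q \<in> carrier_mat m m" and R: "R \<in> carrier_mat m n2"
    and a: "a < n1" and b: "b < n2"
  shows "(transpose_mat P * Q * R) $$ (a, b) = (\<Sum>y<m. \<Sum>x<m. P $$ (y, a) * Q $$ (y, x) * R $$ (x, b))"
  using P Q R a b
  by (simp add: scalar_prod_def sum_distrib_left atLeast0LessThan mult.assoc)

lemma sum_group_mult:
  fixes n d :: nat and f :: "nat \<Rightarrow> 'b::comm_monoid_add"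
  shows
  "(\<Sum>k<n * d. f k) = (\<Sum>t<n. \<Sum>x<d. f (t * d + x))"
proof -
  have "(\<Sum>k<n * d. f k) = (\<Sum>t<n. sum f {t * d..<t * d + d})" by (rule sum.nat_group[symmetric])
  also have "\<dots> = (\<Sum>t<n. \<Sum>x<d. f (t * d + x))"
  proof (rule sum.cong[OF refl])
    fix t
    show "sum f {t * d..<t * d + d} = (\<Sum>x<d. f (t * d + x))"
      using sum.shift_bounds_nat_ivl[of f 0 "t*d" d]
      by (simp add: atLeast0LessThan add.commute)
  qed
  finally show ?thesis .
qed

lemma dm_simps[simp]:
  fixes t d x :: nat
  assumes "x < d"
  shows "(t * d + x) div d = t" "(t * d + x) mod d = x"
  using assms by auto

lemma idx_bound:
  fixes t T d x :: nat
  assumes "t < T" "x < d"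
  shows "t * d + x < T * d"
proof -
  have "t * d + x < t * d + d" using assms by simp
  also have "\<dots> = Suc t * d" by simp
  also have "\<dots> \<le> T * d" using assms by (intro mult_le_mono1) simp
  finally show ?thesis .
qed

lemma G_ent:
  assumes "t < Suc T" "y < m" "p < T" "a < ml"
  shows "G_mat m T A Bl ml $$ (t * m + y, p * ml + a) = (if p < t then (A ^\<^sub>m (t - 1 - p) * Bl) $$ (y, a) else 0)"
  using assms idx_bound[of t "Suc T" y m] idx_bound[of p T a ml]
  unfolding G_mat_def by (simp add: Let_def)

lemma Qbar_ent:
  assumes "t < Suc T" "t' < Suc T" "y < m" "x < m"
  shows "blkdiag_rep (Suc T) m Q $$ (t' * m + y, t * m + x) = (if t' = t then Q $$ (y, x) else 0)"
  using assms idx_bound[of t "Suc T" x m] idx_bound[of t' "Suc T" y m]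
  unfolding blkdiag_rep_def by simp

lemma G_carrier[simp]: "G_mat m T A Bl ml \<in> carrier_mat (Suc T * m) (T * ml)"
  unfolding G_mat_def by simp

lemma Qbar_carrier[simp]: "blkdiag_rep k d Q \<in> carrier_mat (k * d) (k * d)"
  unfolding blkdiag_rep_def by simp

lemma mult_ent:
  fixes X Y :: "'a::comm_semiring_0 mat"
  assumes "i < dim_row X" "k < dim_col Y" "dim_col X = dim_row Y"
  shows "(X * Y) $$ (i, k) = (\<Sum>x<dim_row Y. X $$ (i, x) * Y $$ (x, k))"
  using assms by (simp add: scalar_prod_def atLeast0LessThan)

lemma K_ent:
  fixes A Bj Bi Q :: "real mat"
  assumes A: "A \<in> carrier_mat m m" and Bj: "Bj \<in> carrier_mat m mj" and Bi: "Bi \<in> carrier_mat m mi"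
    and Q: "Q \<in> carrier_mat m m" and p: "p < T" and a: "a < mj" and s: "s < T" and b: "b < mi"
  shows "(transpose_mat (G_mat m T A Bj mj) * blkdiag_rep (Suc T) m Q * G_mat m T A Bi mi) $$ (p * mj + a, s * mi + b)
    = (\<Sum>t<Suc T. if p < t \<and> s < t then (transpose_mat (A ^\<^sub>m (t - 1 - p) * Bj) * Q * (A ^\<^sub>m (t - 1 - s) * Bi)) $$ (a, b) else 0)"
proof -
  define Gj where "Gj = G_mat m T A Bj mj"
  define Gi where "Gi = G_mat m T A Bi mi"
  define Qb where "Qb = blkdiag_rep (Suc T) m Q"
  define r where "r = p * mj + a"
  define c where "c = s * mi + b"
  have r: "r < T * mj" unfolding r_def using idx_bound[OF p a] .
  have c: "c < T * mi" unfolding c_def using idx_bound[OF s b] .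
  have dims: "dim_row Gj = Suc T * m" "dim_col Gj = T * mj" "dim_row Gi = Suc T * m" "dim_col Gi = T * mi"
    "dim_row Qb = Suc T * m" "dim_col Qb = Suc T * m"
    unfolding Gj_def Gi_def Qb_def G_mat_def blkdiag_rep_def by auto
  have "(transpose_mat Gj * Qb * Gi) $$ (r, c) = (\<Sum>k<Suc T * m. (\<Sum>l<Suc T * m. Gj $$ (l, r) * Qb $$ (l, k)) * Gi $$ (k, c))"
  proof -
    have "(transpose_mat Gj * Qb * Gi) $$ (r, c) = (\<Sum>k<Suc T * m. (transpose_mat Gj * Qb) $$ (r, k) * Gi $$ (k, c))"
      using r c dims by (subst mult_ent) auto
    also have "\<dots> = (\<Sum>k<Suc T * m. (\<Sum>l<Suc T * m. Gj $$ (l, r) * Qb $$ (l, k)) * Gi $$ (k, c))"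
    proof (intro sum.cong refl)
      fix k assume "k \<in> {..<Suc T * m}"
      then show "(transpose_mat Gj * Qb) $$ (r, k) * Gi $$ (k, c) = (\<Sum>l<Suc T * m. Gj $$ (l, r) * Qb $$ (l, k)) * Gi $$ (k, c)"
        using r dims by (subst mult_ent) auto
    qed
    finally show ?thesis .
  qed
  also have "\<dots> = (\<Sum>t<Suc T. \<Sum>x<m. (\<Sum>t'<Suc T. \<Sum>y<m. Gj $$ (t' * m + y, r) * Qb $$ (t' * m + y, t * m + x)) * Gi $$ (t * m + x, c))"
    by (simp only: sum_group_mult)
  also have "\<dots> = (\<Sum>t<Suc T. \<Sum>x<m. (\<Sum>y<m. Gj $$ (t * m + y, r) * Q $$ (y, x)) * Gi $$ (t * m + x, c))"
  proof (intro sum.cong refl)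
    fix t x assume t: "t \<in> {..<Suc T}" and x: "x \<in> {..<m}"
    have "(\<Sum>t'<Suc T. \<Sum>y<m. Gj $$ (t' * m + y, r) * Qb $$ (t' * m + y, t * m + x))
       = (\<Sum>t'<Suc T. if t' = t then (\<Sum>y<m. Gj $$ (t * m + y, r) * Q $$ (y, x)) else 0)"
      using t x unfolding Qb_def by (intro sum.cong refl) (auto simp: Qbar_ent)
    also have "\<dots> = (\<Sum>y<m. Gj $$ (t * m + y, r) * Q $$ (y, x))" using t by simp
    finally show "(\<Sum>t'<Suc T. \<Sum>y<m. Gj $$ (t' * m + y, r) * Qb $$ (t' * m + y, t * m + x)) * Gi $$ (t * m + x, c)
       = (\<Sum>y<m. Gj $$ (t * m + y, r) * Q $$ (y, x)) * Gi $$ (t * m + x, c)" by simp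
  qed
  also have "\<dots> = (\<Sum>t<Suc T. if p < t \<and> s < t then (\<Sum>x<m. \<Sum>y<m. (A ^\<^sub>m (t - 1 - p) * Bj) $$ (y, a) * Q $$ (y, x) * (A ^\<^sub>m (t - 1 - s) * Bi) $$ (x, b)) else 0)"
  proof (intro sum.cong refl)
    fix t assume t: "t \<in> {..<Suc T}"
    show "(\<Sum>x<m. (\<Sum>y<m. Gj $$ (t * m + y, r) * Q $$ (y, x)) * Gi $$ (t * m + x, c)) =
      (if p < t \<and> s < t then (\<Sum>x<m. \<Sum>y<m. (A ^\<^sub>m (t - 1 - p) * Bj) $$ (y, a) * Q $$ (y, x) * (A ^\<^sub>m (t - 1 - s) * Bi) $$ (x, b)) else 0)"
    proof -
      have gj: "Gj $$ (t * m + y, r) = (if p < t then (A ^\<^sub>m (t - 1 - p) * Bj) $$ (y, a) else 0)" if "y < m" for y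
        using t p a that unfolding Gj_def r_def by (intro G_ent) auto
      have gi: "Gi $$ (t * m + x, c) = (if s < t then (A ^\<^sub>m (t - 1 - s) * Bi) $$ (x, b) else 0)" if "x < m" for x
        using t s b that unfolding Gi_def c_def by (intro G_ent) auto
      have "(\<Sum>x<m. (\<Sum>y<m. Gj $$ (t * m + y, r) * Q $$ (y, x)) * Gi $$ (t * m + x, c))
        = (\<Sum>x<m. (\<Sum>y<m. (if p < t then (A ^\<^sub>m (t - 1 - p) * Bj) $$ (y, a) else 0) * Q $$ (y, x))
              * (if s < t then (A ^\<^sub>m (t - 1 - s) * Bi) $$ (x, b) else 0))"
        using gj gi by (intro sum.cong refl) auto
      also have "\<dots> = (if p < t \<and> s < t then (\<Sum>x<m. \<Sum>y<m. (A ^\<^sub>m (t - 1 - p) * Bj) $$ (y, a) * Q $$ (y, x) * (A ^\<^sub>m (t - 1 - s) * Bi) $$ (x, b)) else 0)"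
        by (cases "p < t"; cases "s < t") (simp_all add: sum_distrib_right)
      finally show ?thesis .
    qed
  qed
  also have "\<dots> = (\<Sum>t<Suc T. if p < t \<and> s < t then (transpose_mat (A ^\<^sub>m (t - 1 - p) * Bj) * Q * (A ^\<^sub>m (t - 1 - s) * Bi)) $$ (a, b) else 0)"
  proof (intro sum.cong refl)
    fix t
    have P: "A ^\<^sub>m (t - 1 - p) * Bj \<in> carrier_mat m mj" using A Bj by (auto intro!: mult_carrier_mat[of _ m m])
    have R: "A ^\<^sub>m (t - 1 - s) * Bi \<in> carrier_mat m mi" using A Bi by (auto intro!: mult_carrier_mat[of _ m m])
    show "(if p < t \<and> s < t then (\<Sum>x<m. \<Sum>y<m. (A ^\<^sub>m (t - 1 - p) * Bj) $$ (y, a) * Q $$ (y, x) * (A ^\<^sub>m (t - 1 - s) * Bi) $$ (x, b)) else 0)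
      = (if p < t \<and> s < t then (transpose_mat (A ^\<^sub>m (t - 1 - p) * Bj) * Q * (A ^\<^sub>m (t - 1 - s) * Bi)) $$ (a, b) else 0)"
      unfolding triple_entry[OF P Q R a b] by (subst sum.swap) (rule refl)
  qed
  finally show ?thesis unfolding Gj_def Gi_def Qb_def r_def c_def .
qed

lemma obs_ent:
  fixes A Bj :: "real mat"
  assumes A: "A \<in> carrier_mat m m" and Bj: "Bj \<in> carrier_mat m mj" and p: "p < T" and a: "a < mj" and x: "x < m"
  shows "obs_stack m T A Bj mj $$ (p * mj + a, x) = (A ^\<^sub>m p * Bj) $$ (x, a)"
proof -
  have "transpose_mat (A ^\<^sub>m p * Bj) = transpose_mat Bj * (transpose_mat A) ^\<^sub>m p"
    using A Bj by (simp add: transpose_mult[of _ m m _ mj] transpose_pow[OF A])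
  moreover have "transpose_mat (A ^\<^sub>m p * Bj) $$ (a, x) = (A ^\<^sub>m p * Bj) $$ (x, a)"
    using A Bj a x by simp
  ultimately show ?thesis
    using idx_bound[OF p a] a x unfolding obs_stack_def by simp
qed

lemma ctrb_ent:
  fixes A Bi :: "real mat"
  assumes s: "s < T" and b: "b < mi" and x: "x < m"
  shows "ctrb_mat m T A Bi mi $$ (x, s * mi + b) = (A ^\<^sub>m s * Bi) $$ (x, b)"
  using idx_bound[OF s b] b x unfolding ctrb_mat_def by simp

lemma obs_carrier[simp]: "obs_stack m T A Bj mj \<in> carrier_mat (T * mj) m"
  unfolding obs_stack_def by simp

lemma ctrb_carrier[simp]: "ctrb_mat m T A Bi mi \<in> carrier_mat m (T * mi)"
  unfolding ctrb_mat_def by simp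

lemma OQC_ent:
  fixes A Bj Bi Q :: "real mat"
  assumes A: "A \<in> carrier_mat m m" and Bj: "Bj \<in> carrier_mat m mj" and Bi: "Bi \<in> carrier_mat m mi"
    and Q: "Q \<in> carrier_mat m m" and p: "p < T" and a: "a < mj" and s: "s < T" and b: "b < mi"
  shows "(obs_stack m T A Bj mj * Q * ctrb_mat m T A Bi mi) $$ (p * mj + a, s * mi + b)
     = (transpose_mat (A ^\<^sub>m p * Bj) * Q * (A ^\<^sub>m s * Bi)) $$ (a, b)"
proof -
  define Om where "Om = obs_stack m T A Bj mj"
  define Cm where "Cm = ctrb_mat m T A Bi mi"
  define r where "r = p * mj + a"
  define c where "c = s * mi + b"
  have r: "r < T * mj" unfolding r_def using idx_bound[OF p a] .
  have c: "c < T * mi" unfolding c_def using idx_bound[OF s b] .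
  have dims: "dim_row Om = T * mj" "dim_col Om = m" "dim_row Cm = m" "dim_col Cm = T * mi"
    unfolding Om_def Cm_def obs_stack_def ctrb_mat_def by auto
  have P: "A ^\<^sub>m p * Bj \<in> carrier_mat m mj" using A Bj by (auto intro!: mult_carrier_mat[of _ m m])
  have R: "A ^\<^sub>m s * Bi \<in> carrier_mat m mi" using A Bi by (auto intro!: mult_carrier_mat[of _ m m])
  have "(Om * Q * Cm) $$ (r, c) = (\<Sum>x<m. (Om * Q) $$ (r, x) * Cm $$ (x, c))"
    using r c dims Q by (subst mult_ent) auto
  also have "\<dots> = (\<Sum>x<m. (\<Sum>y<m. Om $$ (r, y) * Q $$ (y, x)) * Cm $$ (x, c))"
  proof (intro sum.cong refl)
    fix x assume "x \<in> {..<m}"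
    then show "(Om * Q) $$ (r, x) * Cm $$ (x, c) = (\<Sum>y<m. Om $$ (r, y) * Q $$ (y, x)) * Cm $$ (x, c)"
      using r dims Q by (subst mult_ent) auto
  qed
  also have "\<dots> = (\<Sum>x<m. \<Sum>y<m. (A ^\<^sub>m p * Bj) $$ (y, a) * Q $$ (y, x) * (A ^\<^sub>m s * Bi) $$ (x, b))"
    unfolding Om_def Cm_def r_def c_def
    by (intro sum.cong refl) (simp add: obs_ent[OF A Bj p a] ctrb_ent[OF s b] sum_distrib_right)
  also have "\<dots> = (transpose_mat (A ^\<^sub>m p * Bj) * Q * (A ^\<^sub>m s * Bi)) $$ (a, b)"
    unfolding triple_entry[OF P Q R a b] by (subst sum.swap) (rule refl)
  finally show ?thesis unfolding Om_def Cm_def r_def c_def .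
qed

lemma X_zero:
  fixes A Bj Bi Q :: "real mat"
  assumes A: "A \<in> carrier_mat m m" and Bj: "Bj \<in> carrier_mat m mj" and Bi: "Bi \<in> carrier_mat m mi"
    and Q: "Q \<in> carrier_mat m m"
    and K0: "transpose_mat (G_mat m T A Bj mj) * blkdiag_rep (Suc T) m Q * G_mat m T A Bi mi = 0\<^sub>m (T * mj) (T * mi)"
    and al: "\<alpha> < T" and be: "\<beta> < T" and a: "a < mj" and b: "b < mi"
  shows "(transpose_mat (A ^\<^sub>m \<alpha> * Bj) * Q * (A ^\<^sub>m \<beta> * Bi)) $$ (a, b) = 0"
proof -
  define x where "x u v = (transpose_mat (A ^\<^sub>m u * Bj) * Q * (A ^\<^sub>m v * Bi)) $$ (a, b)" for u v
  define h where "h p s = (\<Sum>t<Suc T. if p < t \<and> s < t then x (t - 1 - p) (t - 1 - s) else 0)" for p s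
  have h0: "h p s = 0" for p s
  proof (cases "p < T \<and> s < T")
    case True
    then have "h p s = (transpose_mat (G_mat m T A Bj mj) * blkdiag_rep (Suc T) m Q * G_mat m T A Bi mi) $$ (p * mj + a, s * mi + b)"
      unfolding h_def x_def using K_ent[OF A Bj Bi Q _ a _ b] True by simp
    also have "\<dots> = 0" unfolding K0 using True idx_bound[of p T a mj] idx_bound[of s T b mi] a b by simp
    finally show ?thesis .
  next
    case False
    then show ?thesis unfolding h_def by (intro sum.neutral) auto
  qed
  have step: "h p s = x (T - 1 - p) (T - 1 - s) + h (Suc p) (Suc s)" if "p < T" "s < T" for p s
  proof -
    have "h p s = (\<Sum>t<T. if p < t \<and> s < t then x (t - 1 - p) (t - 1 - s) else 0) + x (T - 1 - p) (T - 1 - s)"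
      unfolding h_def by (simp only: sum.lessThan_Suc) (simp add: that)
    moreover have "h (Suc p) (Suc s) = (\<Sum>t<T. if p < t \<and> s < t then x (t - 1 - p) (t - 1 - s) else 0)"
    proof -
      have e: "Suc i - 1 - Suc q = i - 1 - q" for i q :: nat by arith
      show ?thesis unfolding h_def by (subst sum.lessThan_Suc_shift) (simp only: e, simp)
    qed
    ultimately show ?thesis by simp
  qed
  define p where "p = T - 1 - \<alpha>"
  define s where "s = T - 1 - \<beta>"
  have ps: "p < T" "s < T" "T - 1 - p = \<alpha>" "T - 1 - s = \<beta>" unfolding p_def s_def using al be by auto
  have "x \<alpha> \<beta> = 0" using step[OF ps(1,2)] h0 ps by simp
  then show ?thesis unfolding x_def .
qed

lemma vsum_carrier: "(\<forall>q<k. f q \<in> carrier_vec d) \<Longrightarrow> vsum d f k \<in> carrier_vec d"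
  by (induction k) auto

lemma vsum_sub:
  assumes h: "\<forall>q<k. h q \<in> carrier_vec d" and e: "e \<in> carrier_vec d"
    and f: "\<forall>q<k. f q = (if q = i then h q - e else h q)"
  shows "vsum d f k = vsum d h k - (if i < k then e else 0\<^sub>v d)"
  using h f
proof (induction k)
  case 0
  then show ?case by (intro eq_vecI) auto
next
  case (Suc k)
  then have IH: "vsum d f k = vsum d h k - (if i < k then e else 0\<^sub>v d)" by auto
  have hk: "h k \<in> carrier_vec d" using Suc by auto
  have H: "vsum d h k \<in> carrier_vec d" using Suc by (intro vsum_carrier) auto
  have fk: "f k = (if k = i then h k - e else h k)" using Suc by auto
  show ?case using IH hk H fk e by (intro eq_vecI) (auto simp: less_Suc_eq)
qed

lemma M_carrier: "M_blk m T A B mi Q R \<gamma> l q \<in> carrier_mat (T * mi l) (T * mi q)"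
  unfolding M_blk_def G_mat_def blkdiag_rep_def by auto

lemma c_carrier: "c_blk m T A B mi Q z0 l \<in> carrier_vec (T * mi l)"
  unfolding c_blk_def G_mat_def blkdiag_rep_def H_mat_def carrier_vec_def by simp

lemma dd_Mv:
  fixes N m T :: nat and v :: "real vec" and A :: "real mat" and B Q R :: "nat \<Rightarrow> real mat"
    and mi :: "nat \<Rightarrow> nat" and \<gamma> :: "nat \<Rightarrow> real" and z0 :: "real vec" and i j :: nat
  assumes gam: "\<forall>l<N. \<gamma> l > 0"
    and ij: "i < N" "j < N" "i \<noteq> j"
    and dd: "dist_decoupled N m T A B mi Q R \<gamma> z0 i j"
    and v: "v \<in> carrier_vec (T * mi i)"
  shows "M_blk m T A B mi Q R \<gamma> j i *\<^sub>v v = 0\<^sub>v (T * mi j)"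
proof -
  define n where "n l = T * mi l" for l
  define M where "M l q = M_blk m T A B mi Q R \<gamma> l q" for l q
  define c where "c l = c_blk m T A B mi Q z0 l" for l
  have Mc: "M l q \<in> carrier_mat (n l) (n q)" for l q unfolding M_def n_def by (rule M_carrier)
  have Mdr: "dim_row (M l q) = n l" "dim_col (M l q) = n q" for l q using Mc[of l q] by auto
  have cc: "c l \<in> carrier_vec (n l)" for l unfolding c_def n_def by (rule c_carrier)
  define U0 :: "nat \<Rightarrow> real vec" where "U0 = (\<lambda>l. 0\<^sub>v (n l))"
  define d :: "nat \<Rightarrow> nat \<Rightarrow> real vec" where "d = (\<lambda>(k::nat) l. if k = 0 \<and> l = i then v else 0\<^sub>v (n l))"
  define d0 :: "nat \<Rightarrow> nat \<Rightarrow> real vec" where "d0 = (\<lambda>(k::nat) l. 0\<^sub>v (n l))"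
  have U0c: "\<forall>l<N. U0 l \<in> carrier_vec (T * mi l)" unfolding U0_def n_def by auto
  have dsi: "dist_seq_in N (\<lambda>l. T * mi l) T i d" unfolding dist_seq_in_def d_def n_def using v by auto
  let ?st = "lq_step N m T A B mi Q R \<gamma> z0"
  have "lq_traj N m T A B mi Q R \<gamma> z0 d U0 (Suc (Suc 0)) j = lq_traj N m T A B mi Q R \<gamma> z0 d0 U0 (Suc (Suc 0)) j"
    using dd U0c dsi unfolding dist_decoupled_def d0_def n_def by blast
  then have eq: "?st (d 1) (?st (d 0) U0) j = ?st (d0 1) (?st (d0 0) U0) j" by simp
  define Y1 where "Y1 = ?st (d 0) U0"
  define U1 where "U1 = ?st (d0 0) U0"
  have U1c: "U1 l \<in> carrier_vec (n l)" for l
    unfolding U1_def lq_step_def d0_def n_def by (intro carrier_vecI) simp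
  have Y1o: "Y1 q = U1 q" if "q \<noteq> i" for q
    unfolding Y1_def U1_def lq_step_def d_def d0_def using that by simp
  have Y1i: "Y1 i = U1 i - \<gamma> i \<cdot>\<^sub>v v"
  proof -
    have vs: "vsum (n i) (\<lambda>q. M i q *\<^sub>v U0 q) N \<in> carrier_vec (n i)"
      by (intro vsum_carrier allI impI carrier_vecI) (simp add: Mdr)
    show ?thesis
      unfolding Y1_def U1_def lq_step_def M_def[symmetric] c_def[symmetric] n_def[symmetric] d_def d0_def
      using vs cc[of i] v unfolding n_def U0_def by (intro eq_vecI) auto
  qed
  define e where "e = \<gamma> i \<cdot>\<^sub>v (M j i *\<^sub>v v)"
  have ec: "e \<in> carrier_vec (n j)" by (intro carrier_vecI) (simp add: e_def Mdr)
  have hc: "\<forall>q<N. M j q *\<^sub>v U1 q \<in> carrier_vec (n j)" by (intro allI impI carrier_vecI) (simp add: Mdr)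
  have fq: "\<forall>q<N. M j q *\<^sub>v Y1 q = (if q = i then M j q *\<^sub>v U1 q - e else M j q *\<^sub>v U1 q)"
  proof (intro allI impI)
    fix q assume "q < N"
    show "M j q *\<^sub>v Y1 q = (if q = i then M j q *\<^sub>v U1 q - e else M j q *\<^sub>v U1 q)"
    proof (cases "q = i")
      case True
      have "M j i *\<^sub>v (U1 i - \<gamma> i \<cdot>\<^sub>v v) = M j i *\<^sub>v U1 i - M j i *\<^sub>v (\<gamma> i \<cdot>\<^sub>v v)"
        using Mc[of j i] U1c[of i] v unfolding n_def by (intro mult_minus_distrib_mat_vec) auto
      also have "M j i *\<^sub>v (\<gamma> i \<cdot>\<^sub>v v) = e" unfolding e_def
        using Mc[of j i] v unfolding n_def by (intro mult_mat_vec) auto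
      finally show ?thesis using True Y1i by simp
    next
      case False
      then show ?thesis using Y1o by simp
    qed
  qed
  have SY: "vsum (n j) (\<lambda>q. M j q *\<^sub>v Y1 q) N = vsum (n j) (\<lambda>q. M j q *\<^sub>v U1 q) N - e"
    using vsum_sub[OF hc ec fq] ij by simp
  have SUc: "vsum (n j) (\<lambda>q. M j q *\<^sub>v U1 q) N \<in> carrier_vec (n j)" using hc by (rule vsum_carrier)
  have eq1: "?st (d 1) Y1 j = ?st (d0 1) U1 j" using eq unfolding Y1_def U1_def .
  have eq2: "Y1 j - vsum (n j) (\<lambda>q. M j q *\<^sub>v Y1 q) N - \<gamma> j \<cdot>\<^sub>v c j - \<gamma> j \<cdot>\<^sub>v 0\<^sub>v (n j)
    = U1 j - vsum (n j) (\<lambda>q. M j q *\<^sub>v U1 q) N - \<gamma> j \<cdot>\<^sub>v c j - \<gamma> j \<cdot>\<^sub>v 0\<^sub>v (n j)"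
    using eq1 unfolding lq_step_def M_def[symmetric] c_def[symmetric] n_def[symmetric] d_def d0_def
    by simp
  have e0: "e $ t = 0" if t: "t < n j" for t
  proof -
    have "(Y1 j - vsum (n j) (\<lambda>q. M j q *\<^sub>v Y1 q) N - \<gamma> j \<cdot>\<^sub>v c j - \<gamma> j \<cdot>\<^sub>v 0\<^sub>v (n j)) $ t
      = (U1 j - vsum (n j) (\<lambda>q. M j q *\<^sub>v U1 q) N - \<gamma> j \<cdot>\<^sub>v c j - \<gamma> j \<cdot>\<^sub>v 0\<^sub>v (n j)) $ t"
      using eq2 by simp
    then show ?thesis unfolding SY using t ec SUc cc[of j] Y1o[of j] ij by simp
  qed
  show ?thesis
  proof (intro eq_vecI)
    fix t assume "t < dim_vec (0\<^sub>v (T * mi j))"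
    then have t: "t < n j" unfolding n_def by simp
    have "\<gamma> i * (M j i *\<^sub>v v) $ t = 0" using e0[OF t] t Mc[of j i] unfolding e_def by simp
    moreover have "\<gamma> i > 0" using gam ij by auto
    ultimately have "(M j i *\<^sub>v v) $ t = 0" by simp
    then show "(M_blk m T A B mi Q R \<gamma> j i *\<^sub>v v) $ t = 0\<^sub>v (T * mi j) $ t" using t unfolding M_def n_def by simp
  next
    show "dim_vec (M_blk m T A B mi Q R \<gamma> j i *\<^sub>v v) = dim_vec (0\<^sub>v (T * mi j))"
      using Mc[of j i] unfolding M_def n_def by simp
  qed
qed


lemma sq_mult_carrier1: "X \<in> carrier_mat n n \<Longrightarrow> Y \<in> carrier_mat n k \<Longrightarrow> X * Y \<in> carrier_mat n k"
  by auto

lemma sq_mult_carrier2: "X \<in> carrier_mat k n \<Longrightarrow> Y \<in> carrier_mat n n \<Longrightarrow> X * Y \<in> carrier_mat k n"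
  by auto

lemma conj_pow:
  fixes A S Sinv :: "real mat"
  assumes A: "A \<in> carrier_mat m m" and S: "S \<in> carrier_mat m m" and Si: "Sinv \<in> carrier_mat m m"
    and inv1: "S * Sinv = 1\<^sub>m m" and inv2: "Sinv * S = 1\<^sub>m m"
  shows "(S * A * Sinv) ^\<^sub>m k = S * (A ^\<^sub>m k) * Sinv"
proof (induction k)
  case 0
  then show ?case using A S Si inv1 by simp
next
  case (Suc k)
  have Ak: "A ^\<^sub>m k \<in> carrier_mat m m" using A by simp
  have "(S * A * Sinv) ^\<^sub>m Suc k = (S * A ^\<^sub>m k * Sinv) * (S * A * Sinv)" using Suc by simp
  also have "\<dots> = S * (A ^\<^sub>m k * ((Sinv * S) * (A * Sinv)))" using A S Si Ak
    by (simp add: assoc_mult_mat[of _ m m _ m _ m] sq_mult_carrier1)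
  also have "\<dots> = S * (A ^\<^sub>m k * A) * Sinv" using A S Si Ak inv2
    by (simp add: assoc_mult_mat[of _ m m _ m _ m] sq_mult_carrier1)
  finally show ?case by simp
qed

lemma conj_ident:
  fixes A S Sinv Bj Bi :: "real mat"
  assumes A: "A \<in> carrier_mat m m" and S: "S \<in> carrier_mat m m" and Si: "Sinv \<in> carrier_mat m m"
    and inv1: "S * Sinv = 1\<^sub>m m" and inv2: "Sinv * S = 1\<^sub>m m" and St: "transpose_mat S = S"
    and Bj: "Bj \<in> carrier_mat m mj" and Bi: "Bi \<in> carrier_mat m mi"
  shows "transpose_mat (S * Bj) * (transpose_mat (S * A * Sinv)) ^\<^sub>m p * ((S * A * Sinv) ^\<^sub>m s * (S * Bi))
     = transpose_mat (A ^\<^sub>m p * Bj) * (S * S) * (A ^\<^sub>m s * Bi)"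
proof -
  have Ap: "A ^\<^sub>m p \<in> carrier_mat m m" and As: "A ^\<^sub>m s \<in> carrier_mat m m" using A by auto
  have Ac: "S * A * Sinv \<in> carrier_mat m m" using A S Si by auto
  have e1: "(S * A * Sinv) ^\<^sub>m p * (S * Bj) = S * (A ^\<^sub>m p * Bj)"
  proof -
    have "(S * A * Sinv) ^\<^sub>m p * (S * Bj) = S * (A ^\<^sub>m p * ((Sinv * S) * Bj))"
      unfolding conj_pow[OF A S Si inv1 inv2] using Ap S Si Bj
      by (simp add: assoc_mult_mat[of _ m m _ m _ mj] sq_mult_carrier1)
    then show ?thesis using inv2 Bj by simp
  qed
  have e2: "(S * A * Sinv) ^\<^sub>m s * (S * Bi) = S * (A ^\<^sub>m s * Bi)"
  proof -
    have "(S * A * Sinv) ^\<^sub>m s * (S * Bi) = S * (A ^\<^sub>m s * ((Sinv * S) * Bi))"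
      unfolding conj_pow[OF A S Si inv1 inv2] using As S Si Bi
      by (simp add: assoc_mult_mat[of _ m m _ m _ mi] sq_mult_carrier1)
    then show ?thesis using inv2 Bi by simp
  qed
  have t1: "transpose_mat (S * Bj) * (transpose_mat (S * A * Sinv)) ^\<^sub>m p
      = transpose_mat ((S * A * Sinv) ^\<^sub>m p * (S * Bj))"
    using Ac S Bj by (simp add: transpose_mult[of _ m m _ mj] transpose_pow[OF Ac])
  also have "\<dots> = transpose_mat (A ^\<^sub>m p * Bj) * S"
    unfolding e1 using S Ap Bj St by (simp add: transpose_mult[of _ m m _ mj])
  finally have t1': "transpose_mat (S * Bj) * (transpose_mat (S * A * Sinv)) ^\<^sub>m p = transpose_mat (A ^\<^sub>m p * Bj) * S" .
  have P: "transpose_mat (A ^\<^sub>m p * Bj) \<in> carrier_mat mj m" using Ap Bj by auto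
  show ?thesis unfolding t1' e2 using P S As Bi
    by (simp add: assoc_mult_mat[of _ mj m _ m _ mi] assoc_mult_mat[of _ m m _ m _ mi] sq_mult_carrier1 sq_mult_carrier2)
qed

lemma pow_vec_carrier[simp]:
  fixes F :: "'a::semiring_1 mat"
  shows "F \<in> carrier_mat m m \<Longrightarrow> v \<in> carrier_vec m \<Longrightarrow> F ^\<^sub>m p *\<^sub>v v \<in> carrier_vec m"
  by (rule mult_mat_vec_carrier[of _ m m]) auto

lemma krylov_stab:
  fixes F C :: "real mat" and v :: "real vec"
  assumes F: "F \<in> carrier_mat m m" and C: "C \<in> carrier_mat r m" and v: "v \<in> carrier_vec m"
    and h: "\<forall>p<m. C *\<^sub>v (F ^\<^sub>m p *\<^sub>v v) = 0\<^sub>v r"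
  shows "C *\<^sub>v (F ^\<^sub>m p *\<^sub>v v) = 0\<^sub>v r"
proof -
  interpret vs: vec_space "TYPE(real)" m .
  define K where "K k = (\<lambda>p. F ^\<^sub>m p *\<^sub>v v) ` {..<k}" for k
  have Kc: "K k \<subseteq> carrier_vec m" for k unfolding K_def using F v by (auto intro!: mult_mat_vec_carrier[of _ m m])
  have "\<exists>k\<le>m. F ^\<^sub>m k *\<^sub>v v \<in> vs.span (K k)"
  proof (rule ccontr)
    assume nx: "\<not> ?thesis"
    have "k \<le> Suc m \<longrightarrow> vs.lin_indpt (K k) \<and> card (K k) = k" for k
    proof (induction k)
      case 0
      then show ?case by (simp add: K_def vs.lin_dep_def)
    next
      case (Suc k)
      show ?case
      proof
        assume k: "Suc k \<le> Suc m"
        with Suc have li: "vs.lin_indpt (K k)" and ck: "card (K k) = k" by auto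
        have ns: "F ^\<^sub>m k *\<^sub>v v \<notin> vs.span (K k)" using nx k by auto
        have nin: "F ^\<^sub>m k *\<^sub>v v \<notin> K k" using ns vs.in_own_span[OF Kc] by auto
        have KS: "K (Suc k) = K k \<union> {F ^\<^sub>m k *\<^sub>v v}" unfolding K_def by (auto simp: lessThan_Suc)
        have "vs.lin_indpt (K (Suc k))" unfolding KS
          using vs.lin_dep_iff_in_span[OF Kc li _ nin] ns F v mult_mat_vec_carrier[of "F ^\<^sub>m k" m m v] by auto
        moreover have "card (K (Suc k)) = Suc k" unfolding KS using nin ck
          by (simp add: K_def)
        ultimately show "vs.lin_indpt (K (Suc k)) \<and> card (K (Suc k)) = Suc k" by auto
      qed
    qed
    then have "vs.lin_indpt (K (Suc m))" "card (K (Suc m)) = Suc m" by auto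
    with vs.li_le_dim(2)[OF vs.fin_dim Kc] vs.dim_is_n show False by fastforce
  qed
  then obtain k where km: "k \<le> m" and kin: "F ^\<^sub>m k *\<^sub>v v \<in> vs.span (K k)" by auto
  have spc: "vs.span (K k) \<subseteq> carrier_vec m" using vs.span_is_subset2[OF Kc] by simp
  have sub: "submodule class_ring (vs.span (K k)) vs.V" using vs.span_is_submodule[OF Kc] by simp
  define N where "N = {w \<in> carrier_vec m. F *\<^sub>v w \<in> vs.span (K k)}"
  have subN: "submodule class_ring N vs.V"
  proof -
    have a: "F *\<^sub>v (x + y) = F *\<^sub>v x + F *\<^sub>v y" if "x \<in> carrier_vec m" "y \<in> carrier_vec m" for x y
      using F that by (simp add: mult_add_distrib_mat_vec)
    have b: "F *\<^sub>v (c \<cdot>\<^sub>v x) = c \<cdot>\<^sub>v (F *\<^sub>v x)" if "x \<in> carrier_vec m" for x c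
      using F that by (simp add: mult_mat_vec)
    have z: "F *\<^sub>v 0\<^sub>v m = 0\<^sub>v m" using F by (intro eq_vecI) auto
    show ?thesis
      apply (unfold_locales)
      using sub F unfolding N_def
      by (auto simp: a b z submodule_def)
  qed
  have KN: "K k \<subseteq> N"
  proof
    fix w assume "w \<in> K k"
    then obtain p where p: "p < k" "w = F ^\<^sub>m p *\<^sub>v v" unfolding K_def by auto
    have e: "F *\<^sub>v w = F ^\<^sub>m (Suc p) *\<^sub>v v" unfolding pow_mat_Suc_left[OF F] using p F v
      by (simp del: pow_mat.simps add: assoc_mult_mat_vec[of _ m m _ m])
    show "w \<in> N"
    proof (cases "Suc p = k")
      case True then show ?thesis using kin e p F v unfolding N_def by auto
    next
      case False
      then have "F ^\<^sub>m (Suc p) *\<^sub>v v \<in> K k" using p unfolding K_def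
        by (intro image_eqI[of _ _ "Suc p"]) auto
      then show ?thesis using e vs.in_own_span[OF Kc] p F v unfolding N_def by auto
    qed
  qed
  have spN: "vs.span (K k) \<subseteq> N" using vs.span_is_subset[OF KN subN] .
  have allp: "F ^\<^sub>m p *\<^sub>v v \<in> vs.span (K k)" for p
  proof (induction p)
    case 0
    have "F ^\<^sub>m 0 *\<^sub>v v \<in> K k \<or> k = 0" unfolding K_def
      by (cases k) (auto intro!: image_eqI[of _ _ 0] simp del: pow_mat.simps)
    then show ?case using vs.in_own_span[OF Kc] kin by auto
  next
    case (Suc p)
    then have "F ^\<^sub>m p *\<^sub>v v \<in> N" using spN by auto
    moreover have "F ^\<^sub>m (Suc p) *\<^sub>v v = F *\<^sub>v (F ^\<^sub>m p *\<^sub>v v)" unfolding pow_mat_Suc_left[OF F] using F v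
      by (simp del: pow_mat.simps add: assoc_mult_mat_vec[of _ m m _ m])
    ultimately show ?case unfolding N_def by auto
  qed
  define Z where "Z = {w \<in> carrier_vec m. C *\<^sub>v w = 0\<^sub>v r}"
  have subZ: "submodule class_ring Z vs.V"
  proof -
    have a: "C *\<^sub>v (x + y) = C *\<^sub>v x + C *\<^sub>v y" if "x \<in> carrier_vec m" "y \<in> carrier_vec m" for x y
      using C that by (simp add: mult_add_distrib_mat_vec)
    have b: "C *\<^sub>v (c \<cdot>\<^sub>v x) = c \<cdot>\<^sub>v (C *\<^sub>v x)" if "x \<in> carrier_vec m" for x c
      using C that by (simp add: mult_mat_vec)
    have z: "C *\<^sub>v 0\<^sub>v m = 0\<^sub>v r" using C by (intro eq_vecI) auto
    show ?thesis
      apply (unfold_locales)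
      using sub C unfolding Z_def
      by (auto simp: a b z submodule_def)
  qed
  have KZ: "K k \<subseteq> Z" using h km F v unfolding K_def Z_def by auto
  have "vs.span (K k) \<subseteq> Z" using vs.span_is_subset[OF KZ subZ] .
  with allp show ?thesis unfolding Z_def by auto
qed


theorem corollary2:
  fixes N m T :: nat and A :: "real mat" and B Q R :: "nat \<Rightarrow> real mat"
    and mi :: "nat \<Rightarrow> nat" and \<gamma> :: "nat \<Rightarrow> real" and z0 :: "real vec" and i j :: nat
  assumes A: "A \<in> carrier_mat m m"
    and B: "\<forall>l<N. B l \<in> carrier_mat m (mi l)"
    and Q: "\<forall>l<N. Q l \<in> carrier_mat m m \<and> sym_mat (Q l)"
    and R: "\<forall>l<N. R l \<in> carrier_mat (mi l) (mi l) \<and> sym_mat (R l)"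
    and gam: "\<forall>l<N. \<gamma> l > 0"
    and z0: "z0 \<in> carrier_vec m"
    and ij: "i < N" "j < N" "i \<noteq> j"
    and dd: "dist_decoupled N m T A B mi Q R \<gamma> z0 i j"
  shows "obs_stack m T A (B j) (mi j) * Q j * ctrb_mat m T A (B i) (mi i) = 0\<^sub>m (T * mi j) (T * mi i)
    \<and> (\<forall>S Sinv. pos_def_mat m (Q j) \<longrightarrow> T \<ge> m \<longrightarrow>
         pos_def_mat m S \<longrightarrow> S * S = Q j \<longrightarrow>
         Sinv \<in> carrier_mat m m \<longrightarrow> S * Sinv = 1\<^sub>m m \<longrightarrow> Sinv * S = 1\<^sub>m m \<longrightarrow>
         ctrb_subspace m (S * A * Sinv) (S * B i) (mi i)
           \<subseteq> unobs_subspace m (transpose_mat (S * B j)) (transpose_mat (S * A * Sinv)))"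
proof -
  have Bj: "B j \<in> carrier_mat m (mi j)" using B ij by auto
  have Bi: "B i \<in> carrier_mat m (mi i)" using B ij by auto
  have Qj: "Q j \<in> carrier_mat m m" using Q ij by auto
  have gj: "\<gamma> j > 0" using gam ij by auto
  define K where "K = transpose_mat (G_mat m T A (B j) (mi j)) * blkdiag_rep (Suc T) m (Q j) * G_mat m T A (B i) (mi i)"
  have Kc: "K \<in> carrier_mat (T * mi j) (T * mi i)" unfolding K_def
    by (rule mult_carrier_mat[OF mult_carrier_mat[OF transpose_carrier_mat[THEN iffD2, OF G_carrier] Qbar_carrier] G_carrier])
  have K0: "K = 0\<^sub>m (T * mi j) (T * mi i)"
  proof (rule eq_matI)
    fix r c assume r0: "r < dim_row (0\<^sub>m (T * mi j) (T * mi i))" and c0: "c < dim_col (0\<^sub>m (T * mi j) (T * mi i))"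
    then have r: "r < T * mi j" and c: "c < T * mi i" by auto
    let ?M = "M_blk m T A B mi Q R \<gamma> j i"
    have Mc: "?M \<in> carrier_mat (T * mi j) (T * mi i)" by (rule M_carrier)
    have "?M *\<^sub>v unit_vec (T * mi i) c = 0\<^sub>v (T * mi j)" by (rule dd_Mv[OF gam ij dd]) simp
    then have "(?M *\<^sub>v unit_vec (T * mi i) c) $ r = 0" using r by simp
    moreover have "(?M *\<^sub>v unit_vec (T * mi i) c) $ r = ?M $$ (r, c)" using r c Mc by simp
    moreover have "?M $$ (r, c) = \<gamma> j * K $$ (r, c)"
      unfolding M_blk_def K_def using ij r c by (simp add: G_mat_def blkdiag_rep_def)
    ultimately have "K $$ (r, c) = 0" using gj by simp
    then show "K $$ (r, c) = 0\<^sub>m (T * mi j) (T * mi i) $$ (r, c)" using r c by simp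
  qed (use Kc in auto)
  have Xz: "(transpose_mat (A ^\<^sub>m \<alpha> * B j) * Q j * (A ^\<^sub>m \<beta> * B i)) $$ (a, b) = 0"
    if "\<alpha> < T" "\<beta> < T" "a < mi j" "b < mi i" for \<alpha> \<beta> a b
    using X_zero[OF A Bj Bi Qj K0[unfolded K_def] that] .
  have part1: "obs_stack m T A (B j) (mi j) * Q j * ctrb_mat m T A (B i) (mi i) = 0\<^sub>m (T * mi j) (T * mi i)"
  proof (rule eq_matI)
    fix r c assume r0: "r < dim_row (0\<^sub>m (T * mi j) (T * mi i))" and c0: "c < dim_col (0\<^sub>m (T * mi j) (T * mi i))"
    then have r: "r < T * mi j" and c: "c < T * mi i" by auto
    define p where "p = r div mi j"
    define a where "a = r mod mi j"
    define s where "s = c div mi i"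
    define b where "b = c mod mi i"
    have mj0: "mi j > 0" using r by (cases "mi j") auto
    have mi0: "mi i > 0" using c by (cases "mi i") auto
    have p: "p < T" unfolding p_def using r by (simp add: less_mult_imp_div_less)
    have s: "s < T" unfolding s_def using c by (simp add: less_mult_imp_div_less)
    have a: "a < mi j" unfolding a_def using mj0 by simp
    have b: "b < mi i" unfolding b_def using mi0 by simp
    have rr: "r = p * mi j + a" unfolding p_def a_def by simp
    have cc: "c = s * mi i + b" unfolding s_def b_def by simp
    have "(obs_stack m T A (B j) (mi j) * Q j * ctrb_mat m T A (B i) (mi i)) $$ (r, c)
       = (transpose_mat (A ^\<^sub>m p * B j) * Q j * (A ^\<^sub>m s * B i)) $$ (a, b)"
      unfolding rr cc by (rule OQC_ent[OF A Bj Bi Qj p a s b])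
    also have "\<dots> = 0" using Xz[OF p s a b] .
    finally show "(obs_stack m T A (B j) (mi j) * Q j * ctrb_mat m T A (B i) (mi i)) $$ (r, c) = 0\<^sub>m (T * mi j) (T * mi i) $$ (r, c)"
      using r c by simp
  qed (auto simp: obs_stack_def ctrb_mat_def)
  have part2: "ctrb_subspace m (S * A * Sinv) (S * B i) (mi i)
           \<subseteq> unobs_subspace m (transpose_mat (S * B j)) (transpose_mat (S * A * Sinv))"
    if Qpd: "pos_def_mat m (Q j)" and Tm: "T \<ge> m" and Spd: "pos_def_mat m S" and SS: "S * S = Q j"
      and Si: "Sinv \<in> carrier_mat m m" and inv1: "S * Sinv = 1\<^sub>m m" and inv2: "Sinv * S = 1\<^sub>m m" for S Sinv
  proof
    have S: "S \<in> carrier_mat m m" and St: "transpose_mat S = S" using Spd unfolding pos_def_mat_def sym_mat_def by auto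
    fix x assume "x \<in> ctrb_subspace m (S * A * Sinv) (S * B i) (mi i)"
    then obtain w where w: "w \<in> carrier_vec (m * mi i)" and x: "x = ctrb_mat m m (S * A * Sinv) (S * B i) (mi i) *\<^sub>v w"
      unfolding ctrb_subspace_def by auto
    define F where "F = transpose_mat (S * A * Sinv)"
    define C where "C = transpose_mat (S * B j)"
    define Ct where "Ct = ctrb_mat m m (S * A * Sinv) (S * B i) (mi i)"
    have Fc: "F \<in> carrier_mat m m" unfolding F_def using S A Si by auto
    have Cc: "C \<in> carrier_mat (mi j) m" unfolding C_def using S Bj by auto
    have Ctc: "Ct \<in> carrier_mat m (m * mi i)" unfolding Ct_def by simp
    have xc: "x \<in> carrier_vec m" unfolding x Ct_def[symmetric] using Ctc w by auto
    have hp: "\<forall>p<m. C *\<^sub>v (F ^\<^sub>m p *\<^sub>v x) = 0\<^sub>v (mi j)"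
    proof (intro allI impI)
      fix p assume pm: "p < m"
      have Fp: "F ^\<^sub>m p \<in> carrier_mat m m" using Fc by simp
      have "C *\<^sub>v (F ^\<^sub>m p *\<^sub>v x) = (C * F ^\<^sub>m p * Ct) *\<^sub>v w"
      proof -
        have e1: "C * F ^\<^sub>m p * Ct = C * (F ^\<^sub>m p * Ct)" using Cc Fp Ctc by (rule assoc_mult_mat)
        have e2: "(C * (F ^\<^sub>m p * Ct)) *\<^sub>v w = C *\<^sub>v ((F ^\<^sub>m p * Ct) *\<^sub>v w)"
          using Cc mult_carrier_mat[OF Fp Ctc] w by (rule assoc_mult_mat_vec)
        have e3: "(F ^\<^sub>m p * Ct) *\<^sub>v w = F ^\<^sub>m p *\<^sub>v (Ct *\<^sub>v w)" using Fp Ctc w by (rule assoc_mult_mat_vec)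
        show ?thesis unfolding x Ct_def[symmetric] e1 e2 e3 ..
      qed
      also have "C * F ^\<^sub>m p * Ct = 0\<^sub>m (mi j) (m * mi i)"
      proof (rule eq_matI)
        fix a c assume a0: "a < dim_row (0\<^sub>m (mi j) (m * mi i))" and c0: "c < dim_col (0\<^sub>m (mi j) (m * mi i))"
        then have a: "a < mi j" and c: "c < m * mi i" by auto
        define s where "s = c div mi i"
        define b where "b = c mod mi i"
        have mi0: "mi i > 0" using c by (cases "mi i") auto
        have s: "s < m" unfolding s_def using c by (simp add: less_mult_imp_div_less)
        have b: "b < mi i" unfolding b_def using mi0 by simp
        have cc: "c = s * mi i + b" unfolding s_def b_def by simp
        have CF: "C * F ^\<^sub>m p \<in> carrier_mat (mi j) m" using Cc Fp by auto
        have Rs: "(S * A * Sinv) ^\<^sub>m s * (S * B i) \<in> carrier_mat m (mi i)" using S A Si Bi by auto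
        have "(C * F ^\<^sub>m p * Ct) $$ (a, c) = (\<Sum>y<m. (C * F ^\<^sub>m p) $$ (a, y) * Ct $$ (y, c))"
          using CF Ctc a c by (subst mult_ent) auto
        also have "\<dots> = (\<Sum>y<m. (C * F ^\<^sub>m p) $$ (a, y) * ((S * A * Sinv) ^\<^sub>m s * (S * B i)) $$ (y, b))"
          unfolding Ct_def cc using ctrb_ent[OF s b] by simp
        also have "\<dots> = (C * F ^\<^sub>m p * ((S * A * Sinv) ^\<^sub>m s * (S * B i))) $$ (a, b)"
        proof -
          have dR: "dim_row ((S * A * Sinv) ^\<^sub>m s * (S * B i)) = m"
            and dR2: "dim_col ((S * A * Sinv) ^\<^sub>m s * (S * B i)) = mi i" using carrier_matD[OF Rs] by auto
          have d1: "dim_row (C * F ^\<^sub>m p) = mi j" "dim_col (C * F ^\<^sub>m p) = m" using carrier_matD[OF CF] by auto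
          have "(C * F ^\<^sub>m p * ((S * A * Sinv) ^\<^sub>m s * (S * B i))) $$ (a, b)
            = (\<Sum>y<dim_row ((S * A * Sinv) ^\<^sub>m s * (S * B i)). (C * F ^\<^sub>m p) $$ (a, y) * ((S * A * Sinv) ^\<^sub>m s * (S * B i)) $$ (y, b))"
            by (rule mult_ent) (simp_all only: d1 dR dR2 a b)
          then show ?thesis unfolding dR by simp
        qed
        also have "\<dots> = (transpose_mat (A ^\<^sub>m p * B j) * Q j * (A ^\<^sub>m s * B i)) $$ (a, b)"
          unfolding C_def F_def conj_ident[OF A S Si inv1 inv2 St Bj Bi] SS ..
        also have "\<dots> = 0" using Xz pm s Tm a b by simp
        finally show "(C * F ^\<^sub>m p * Ct) $$ (a, c) = 0\<^sub>m (mi j) (m * mi i) $$ (a, c)" using a c by simp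
      qed (use Ctc Cc Fp in auto)
      also have "0\<^sub>m (mi j) (m * mi i) *\<^sub>v w = 0\<^sub>v (mi j)" using w by (intro eq_vecI) auto
      finally show "C *\<^sub>v (F ^\<^sub>m p *\<^sub>v x) = 0\<^sub>v (mi j)" .
    qed
    have "C *\<^sub>v (F ^\<^sub>m p *\<^sub>v x) = 0\<^sub>v (mi j)" for p using krylov_stab[OF Fc Cc xc hp] .
    then show "x \<in> unobs_subspace m (transpose_mat (S * B j)) (transpose_mat (S * A * Sinv))"
      unfolding unobs_subspace_def C_def[symmetric] F_def[symmetric] using xc Cc by auto
  qed
  show ?thesis using part1 part2 by blast
qed

end
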